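(* Let $n\ge2$, $a_1,\dots,a_n>0$, and let $\mathbf{A}$ be the $n\times n$ matrix whose first column has all entries equal to $-a_n$, whose superdiagonal entries are $A_{i,i+1}=a_i$ for $i\in\{1,\dots,n-1\}$, and all of whose other entries are $0$: $$\mathbf{A}=\begin{pmatrix}-a_n&a_1&0&\cdots&0\\-a_n&0&a_2&\ddots&\vdots\\\vdots&\vdots&\ddots&\ddots&0\\-a_n&0&\cdots&0&a_{n-1}\\-a_n&0&\cdots&0&0\end{pmatrix}.$$ Then the spectral radius satisfies $\rho(\mathbf{A})\le\max\{a_1,\dots,a_n\}$.
   Context: The spectral radius $\rho(\mathbf{A})$ is the maximum modulus of the complex eigenvalues of $\mathbf{A}$. *)

theory Defs
  imports "Jordan_Normal_Form.Spectral_Radius"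
begin

text \<open>The matrix A of the paper, with 0-based indexing: a 0, ..., a (n-1) stand for
  a_1, ..., a_n.\<close>
definition cycle_mat :: "nat \<Rightarrow> (nat \<Rightarrow> real) \<Rightarrow> complex mat" where
  "cycle_mat n a = mat n n (\<lambda>(i, j).
     if j = 0 then - complex_of_real (a (n - 1))
     else if j = i + 1 then complex_of_real (a i)
     else 0)"

end

theory Submission
  imports Defs
begin

lemma cycle_mat_mult:
  assumes v: "v \<in> carrier_vec n" and i: "i < n"
  shows "(cycle_mat n a *\<^sub>v v) $ i = - complex_of_real (a (n - 1)) * v $ 0
     + (if Suc i < n then complex_of_real (a i) * v $ Suc i else 0)"
proof -
  have n0: "0 < n" using i by simp
  have "(cycle_mat n a *\<^sub>v v) $ i = (\<Sum>j<n. (cycle_mat n a) $$ (i, j) * v $ j)"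
    using v i unfolding cycle_mat_def mult_mat_vec_def scalar_prod_def
    by (simp add: atLeast0LessThan)
  also have "\<dots> = (\<Sum>j<n. (if j = 0 then - complex_of_real (a (n - 1)) * v $ 0 else 0)
      + (if j = Suc i then complex_of_real (a i) * v $ Suc i else 0))"
    by (rule sum.cong, auto simp: cycle_mat_def i)
  also have "\<dots> = - complex_of_real (a (n - 1)) * v $ 0
     + (if Suc i < n then complex_of_real (a i) * v $ Suc i else 0)"
    by (simp add: sum.distrib n0)
  finally show ?thesis .
qed

lemma core:
  fixes f :: "nat \<Rightarrow> complex" and a :: "nat \<Rightarrow> real" and l :: complex
  assumes n: "n \<ge> 1"
    and pos: "\<And>i. i < n \<Longrightarrow> 0 < a i \<and> a i \<le> M"
    and lM: "M < norm l"
    and eq: "\<And>i. i < n \<Longrightarrow> l * f i = - complex_of_real (a (n - 1)) * f 0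
     + (if Suc i < n then complex_of_real (a i) * f (Suc i) else 0)"
  shows "f 0 = 0"
proof (rule ccontr)
  assume f0: "f 0 \<noteq> 0"
  have M0: "M > 0" using pos[of 0] n by auto
  have l0: "l \<noteq> 0" using lM M0 by auto
  define c where "c = a (n - 1)"
  have c0: "0 < c" "c \<le> M" using pos[of "n-1"] n unfolding c_def by auto
  define z where "z = complex_of_real M / l"
  have nz: "norm z < 1" unfolding z_def using lM M0 by (simp add: norm_divide divide_less_eq)
  have pw: "norm z ^ Suc j \<le> norm z" for j
    using nz by (simp add: mult_left_le power_le_one)
  define P where "P k = (\<Prod>i<k. a i)" for k
  define s where "s k = (if k = 0 then 1 else c * P (k - 1) / M ^ k)" for k
  define q where "q k = complex_of_real (P k) * f k / (f 0 * l ^ k)" for k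
  define R where "R k = (1 - z) * q k + complex_of_real (s k) * z ^ (Suc k)" for k
  have Pk: "P (Suc k) = P k * a k" for k unfolding P_def by simp
  have s_nonneg: "0 \<le> s k" if "k \<le> n" for k
    using that c0 M0 unfolding s_def P_def
    by (auto intro!: prod_nonneg divide_nonneg_pos mult_nonneg_nonneg
        simp: less_imp_le[OF conjunct1[OF pos]])
  have s_mono: "s (Suc k) \<le> s k" if "k < n" for k
  proof (cases k)
    case 0 then show ?thesis using c0 M0 by (simp add: s_def P_def)
  next
    case (Suc j)
    have "s (Suc k) = s k * (a j / M)" using Suc M0 unfolding s_def
      by (simp add: Pk field_simps)
    also have "\<dots> \<le> s k * 1" using pos[of j] Suc that M0 s_nonneg[of k]
      by (intro mult_left_mono) auto
    finally show ?thesis by simp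
  qed
  have rec: "q (Suc k) = q k + complex_of_real (s (Suc k)) * z ^ Suc k" if "k < n - 1" for k
  proof -
    have e: "complex_of_real (a k) * f (Suc k) = l * f k + complex_of_real c * f 0"
      using eq[of k] that unfolding c_def by auto
    have "q (Suc k) = complex_of_real (P k) * (complex_of_real (a k) * f (Suc k)) / (f 0 * l ^ Suc k)"
      unfolding q_def Pk by (simp add: algebra_simps)
    also have "\<dots> = complex_of_real (P k) * (l * f k + complex_of_real c * f 0) / (f 0 * l ^ Suc k)"
      by (simp add: e)
    also have "\<dots> = q k + complex_of_real (s (Suc k)) * z ^ Suc k"
      unfolding q_def s_def z_def using f0 l0 M0
      by (simp add: field_simps power_divide)
    finally show ?thesis .
  qed
  have fin: "q (n - 1) + complex_of_real (s n) * z ^ n = 0"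
  proof -
    have e: "l * f (n - 1) = - complex_of_real c * f 0"
      using eq[of "n-1"] n unfolding c_def by auto
    have nn: "n = Suc (n - 1)" using n by simp
    have "q (n - 1) = complex_of_real (P (n - 1)) * (l * f (n - 1)) / (f 0 * l ^ n)"
      unfolding q_def using l0 by (subst nn, simp add: field_simps)
    also have "\<dots> = - complex_of_real (s n) * z ^ n"
      unfolding e s_def z_def using f0 l0 M0 n
      by (simp add: field_simps power_divide)
    finally show ?thesis by simp
  qed
  have Rrec: "R (Suc k) = R k + complex_of_real (s (Suc k) - s k) * z ^ Suc k" if "k < n - 1" for k
    unfolding R_def rec[OF that] by (simp add: algebra_simps)
  have inv: "norm (R k - 1) \<le> (1 - s k) * norm z" if "k \<le> n - 1" for k
    using that
  proof (induction k)
    case 0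
    then show ?case unfolding R_def q_def s_def P_def using f0 by simp
  next
    case (Suc k)
    have k: "k < n - 1" using Suc by simp
    have "norm (R (Suc k) - 1) \<le> norm (R k - 1) + norm (complex_of_real (s (Suc k) - s k) * z ^ Suc k)"
      unfolding Rrec[OF k] using norm_triangle_ineq[of "R k - 1" "complex_of_real (s (Suc k) - s k) * z ^ Suc k"] by (simp add: algebra_simps)
    also have "norm (complex_of_real (s (Suc k) - s k) * z ^ Suc k) = (s k - s (Suc k)) * norm z ^ Suc k"
      using s_mono[of k] k by (simp only: norm_mult norm_power norm_of_real, simp)
    also have "\<dots> \<le> (s k - s (Suc k)) * norm z"
      using s_mono[of k] k pw[of k] by (intro mult_left_mono) auto
    finally show ?case using Suc.IH k by (simp add: algebra_simps)
  qed
  have nn: "n = Suc (n - 1)" using n by simp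
  have key: "complex_of_real (s n) * z ^ Suc n = R (n - 1) + complex_of_real (s n - s (n - 1)) * z ^ n"
  proof -
    have "q (n - 1) = - complex_of_real (s n) * z ^ n" using fin by (simp add: eq_neg_iff_add_eq_0)
    moreover obtain m where m: "n = Suc m" using n by (cases n) auto
    ultimately show ?thesis unfolding R_def by (simp add: m algebra_simps)
  qed
  have "norm (complex_of_real (s n) * z ^ Suc n - 1) \<le> norm (R (n - 1) - 1) + norm (complex_of_real (s n - s (n - 1)) * z ^ n)"
    unfolding key using norm_triangle_ineq[of "R (n - 1) - 1" "complex_of_real (s n - s (n - 1)) * z ^ n"] by (simp add: algebra_simps)
  also have "norm (complex_of_real (s n - s (n - 1)) * z ^ n) = (s (n - 1) - s n) * norm z ^ n"
    using s_mono[of "n-1"] n by (simp only: norm_mult norm_power norm_of_real, simp)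
  also have "\<dots> \<le> (s (n - 1) - s n) * norm z"
    using s_mono[of "n-1"] n pw[of "n-1"] by (subst nn, intro mult_left_mono) auto
  finally have A: "norm (complex_of_real (s n) * z ^ Suc n - 1) \<le> (1 - s n) * norm z"
    using inv[of "n-1"] by (simp add: algebra_simps)
  have B: "norm (complex_of_real (s n) * z ^ Suc n) \<le> s n * norm z"
  proof -
    have "norm (complex_of_real (s n) * z ^ Suc n) = s n * (norm z * norm z ^ n)"
      using s_nonneg[of n] by (simp add: norm_mult norm_power)
    also have "\<dots> \<le> s n * (norm z * 1)"
      using s_nonneg[of n] nz by (intro mult_left_mono mult_left_mono power_le_one) auto
    finally show ?thesis by simp
  qed
  have "1 \<le> norm (complex_of_real (s n) * z ^ Suc n) + norm (complex_of_real (s n) * z ^ Suc n - 1)"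
    using norm_triangle_ineq4[of "complex_of_real (s n) * z ^ Suc n" "complex_of_real (s n) * z ^ Suc n - 1"] by simp
  with A B have "1 \<le> norm z" by (simp add: algebra_simps)
  with nz show False by simp
qed


lemma zero_case:
  fixes f :: "nat \<Rightarrow> complex" and a :: "nat \<Rightarrow> real" and l :: complex
  assumes l0: "l \<noteq> 0" and f0: "f 0 = 0"
    and eq: "\<And>i. i < n \<Longrightarrow> l * f i = - complex_of_real (a (n - 1)) * f 0
     + (if Suc i < n then complex_of_real (a i) * f (Suc i) else 0)"
  shows "j < n \<Longrightarrow> f (n - 1 - j) = 0"
proof (induction j)
  case 0
  then show ?case using eq[of "n-1"] f0 l0 by auto
next
  case (Suc j)
  have "l * f (n - 1 - Suc j) = complex_of_real (a (n - 1 - Suc j)) * f (Suc (n - 1 - Suc j))"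
    using eq[of "n - 1 - Suc j"] f0 Suc.prems by auto
  also have "Suc (n - 1 - Suc j) = n - 1 - j" using Suc.prems by simp
  finally show ?case using Suc l0 by simp
qed

theorem mainTheorem11:
  fixes n :: nat and a :: "nat \<Rightarrow> real"
  assumes "n \<ge> 2"
    and "\<And>i. i < n \<Longrightarrow> a i > 0"
  shows "spectral_radius (cycle_mat n a) \<le> Max (a ` {..<n})"
proof -
  define M where "M = Max (a ` {..<n})"
  have aM: "0 < a i \<and> a i \<le> M" if "i < n" for i
    using assms(2)[OF that] that unfolding M_def by auto
  have A: "cycle_mat n a \<in> carrier_mat n n" unfolding cycle_mat_def by simp
  have n0: "0 < n" using assms(1) by simp
  obtain l where l: "l \<in> spectrum (cycle_mat n a)" "spectral_radius (cycle_mat n a) = norm l"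
    using spectral_radius_mem_max(1)[OF A n0] by auto
  have "norm l \<le> M"
  proof (rule ccontr)
    assume "\<not> norm l \<le> M"
    hence lM: "M < norm l" by simp
    have M0: "M > 0" using aM[OF n0] by auto
    have l0: "l \<noteq> 0" using lM M0 by auto
    from l(1) obtain v where ev: "eigenvector (cycle_mat n a) v l"
      unfolding spectrum_def eigenvalue_def by auto
    have v: "v \<in> carrier_vec n" "v \<noteq> 0\<^sub>v n" "cycle_mat n a *\<^sub>v v = l \<cdot>\<^sub>v v"
      using ev A unfolding eigenvector_def by auto
    have eq: "l * v $ i = - complex_of_real (a (n - 1)) * v $ 0
     + (if Suc i < n then complex_of_real (a i) * v $ Suc i else 0)" if "i < n" for i
    proof -
      have "(cycle_mat n a *\<^sub>v v) $ i = (l \<cdot>\<^sub>v v) $ i" using v(3) by simp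
      then show ?thesis using cycle_mat_mult[OF v(1) that, of a] that v(1) by simp
    qed
    have f0: "v $ 0 = 0"
      by (rule core[of n a M l "\<lambda>i. v $ i"], use assms(1) aM lM eq in auto)
    have "v $ i = 0" if "i < n" for i
    proof -
      have "v $ (n - 1 - (n - 1 - i)) = 0"
        by (rule zero_case[of l "\<lambda>i. v $ i" n a], use l0 f0 eq that in auto)
      thus ?thesis using that by simp
    qed
    hence "v = 0\<^sub>v n" using v(1) by (intro eq_vecI) auto
    with v(2) show False by simp
  qed
  thus ?thesis using l(2) unfolding M_def by simp
qed

end
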